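(* The multi-resolution LCMM is arbitrage-free: for every $\boldsymbol\theta\in\mathbb R^{\mathcal Z^*}$ and every $\boldsymbol\eta^\star\in\mathbb R^{\mathcal Y^*}$ minimizing $\boldsymbol\eta\mapsto\tilde C(\boldsymbol\theta+\mathbf A\boldsymbol\eta)$, the price vector $\boldsymbol p(\boldsymbol\theta)=\nabla\tilde C(\boldsymbol\theta+\mathbf A\boldsymbol\eta^\star)$ satisfies $\mathbf A^\top\boldsymbol p(\boldsymbol\theta)=\mathbf 0$ and lies in the coherent price space $\mathcal M=\mathrm{conv}\{\boldsymbol\phi(\omega):\omega\in\Omega\}$.
   Context: Fix an integer $K\ge1$, $N=2^K$, $\Omega=\{j/N:j=0,\dots,N-1\}$. Let $T^*$ be the complete binary tree of depth $K$ whose nodes are intervals: the root (level $0$) has $I_{\mathit{root}}=[0,1)$, and each node $z$ at level $k<K$ with $I_z=[\alpha_z,\beta_z)$ has children $\mathrm{left}(z)$, $\mathrm{right}(z)$ at level $k+1$ with intervals $[\alpha_z,\frac{\alpha_z+\beta_z}2)$ and $[\frac{\alpha_z+\beta_z}2,\beta_z)$. Let $\mathcal Z^*$ be its node set, $\mathcal Z_k$ the nodes at level $k$, $\mathrm{level}(z)$ the level of $z$, and $\mathcal Y^*=\mathcal Z^*\setminus\mathcal Z_K$ the inner nodes. Each node $z$ indexes an interval security with payoff $\phi_z(\omega)=1\{\omega\in I_z\}$; $\boldsymbol\phi(\omega)=(\phi_z(\omega))_{z\in\mathcal Z^*}$. Fix liquidity parameters $b_k>0$ for $k=0,\dots,K$,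 and set $B_\ell=\sum_{k=\ell+1}^K b_k$ for $\ell=-1,0,\dots,K$. For $\boldsymbol\theta\in\mathbb R^{\mathcal Z^*}$ write $\boldsymbol\theta_k$ for its restriction to $\mathcal Z_k$, let $C_k(\boldsymbol\theta_k)=b_k\log\sum_{z\in\mathcal Z_k}e^{\theta_z/b_k}$, and let $\tilde C(\boldsymbol\theta)=\sum_{k=0}^K C_k(\boldsymbol\theta_k)$ (direct-sum cost). The constraint matrix $\mathbf A\in\mathbb R^{\mathcal Z^*\times\mathcal Y^*}$ has entries $A_{zy}=B_{\mathrm{level}(z)}$ if $z=y$, $A_{zy}=-b_{\mathrm{level}(z)}$ if $I_z\subsetneq I_y$, and $0$ otherwise. The multi-resolution LCMM has cost function $C(\boldsymbol\theta)=\inf_{\boldsymbol\eta\in\mathbb R^{\mathcal Y^*}}\tilde C(\boldsymbol\theta+\mathbf A\boldsymbol\eta)$. *)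

theory Defs
  imports "HOL-Analysis.Analysis"
begin

text \<open>Nodes of the complete binary tree T* of depth K are encoded as pairs (k, j):
  level k, position j < 2^k, with interval [j/2^k, (j+1)/2^k).  The root is (0,0) with
  interval [0,1), and node (k,j) has children (k+1,2j) and (k+1,2j+1), i.e. the left and
  right halves of its interval.\<close>

type_synonym node = "nat \<times> nat"

definition level :: "node \<Rightarrow> nat" where
  "level z = fst z"

definition alpha :: "node \<Rightarrow> real" where
  "alpha z = real (snd z) / 2 ^ fst z"

definition beta :: "node \<Rightarrow> real" where
  "beta z = (real (snd z) + 1) / 2 ^ fst z"

definition interval :: "node \<Rightarrow> real set" where
  "interval z = {alpha z ..< beta z}"

definition nodes :: "nat \<Rightarrow> node set" where
  "nodes K = {(k, j). k \<le> K \<and> j < 2 ^ k}"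

definition level_nodes :: "nat \<Rightarrow> nat \<Rightarrow> node set" where
  "level_nodes K k = {z \<in> nodes K. level z = k}"

definition inner_nodes :: "nat \<Rightarrow> node set" where
  "inner_nodes K = nodes K - level_nodes K K"

definition outcomes :: "nat \<Rightarrow> real set" where
  "outcomes K = {real j / 2 ^ K | j. j < 2 ^ K}"

definition phi :: "node \<Rightarrow> real \<Rightarrow> real" where
  "phi z \<omega> = (if \<omega> \<in> interval z then 1 else 0)"

definition Bsum :: "nat \<Rightarrow> (nat \<Rightarrow> real) \<Rightarrow> nat \<Rightarrow> real" where
  "Bsum K b l = (\<Sum>k\<in>{l+1..K}. b k)"

definition Ck :: "nat \<Rightarrow> (nat \<Rightarrow> real) \<Rightarrow> nat \<Rightarrow> (node \<Rightarrow> real) \<Rightarrow> real" where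
  "Ck K b k \<theta> = b k * ln (\<Sum>z\<in>level_nodes K k. exp (\<theta> z / b k))"

definition Ctilde :: "nat \<Rightarrow> (nat \<Rightarrow> real) \<Rightarrow> (node \<Rightarrow> real) \<Rightarrow> real" where
  "Ctilde K b \<theta> = (\<Sum>k\<le>K. Ck K b k \<theta>)"

definition Amat :: "nat \<Rightarrow> (nat \<Rightarrow> real) \<Rightarrow> node \<Rightarrow> node \<Rightarrow> real" where
  "Amat K b z y =
     (if z = y then Bsum K b (level z)
      else if interval z \<subset> interval y then - b (level z) else 0)"

definition shift :: "nat \<Rightarrow> (nat \<Rightarrow> real) \<Rightarrow> (node \<Rightarrow> real) \<Rightarrow> (node \<Rightarrow> real) \<Rightarrow> node \<Rightarrow> real" where
  "shift K b \<theta> \<eta> z = \<theta> z + (\<Sum>y\<in>inner_nodes K. Amat K b z y * \<eta> y)"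

definition Atrans :: "nat \<Rightarrow> (nat \<Rightarrow> real) \<Rightarrow> (node \<Rightarrow> real) \<Rightarrow> node \<Rightarrow> real" where
  "Atrans K b p y = (\<Sum>z\<in>nodes K. Amat K b z y * p z)"

definition is_gradient :: "node set \<Rightarrow> ((node \<Rightarrow> real) \<Rightarrow> real) \<Rightarrow> (node \<Rightarrow> real) \<Rightarrow> (node \<Rightarrow> real) \<Rightarrow> bool" where
  "is_gradient S f x p \<longleftrightarrow>
     (\<forall>z\<in>S. ((\<lambda>t. f (x(z := x z + t))) has_real_derivative p z) (at 0))"

text \<open>Membership in the coherent price space M = conv{phi(omega) : omega in Omega}
  (convex hull of a finite set written out as convex combinations).\<close>
definition in_coherent_space :: "nat \<Rightarrow> (node \<Rightarrow> real) \<Rightarrow> bool" where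
  "in_coherent_space K p \<longleftrightarrow>
     (\<exists>\<mu> :: real \<Rightarrow> real. (\<forall>\<omega>\<in>outcomes K. \<mu> \<omega> \<ge> 0) \<and> (\<Sum>\<omega>\<in>outcomes K. \<mu> \<omega>) = 1 \<and>
        (\<forall>z\<in>nodes K. p z = (\<Sum>\<omega>\<in>outcomes K. \<mu> \<omega> * phi z \<omega>)))"

end

theory Submission
  imports Defs
begin

lemma nodes_Sigma: "nodes K = Sigma {..K} (\<lambda>k. {..<2^k})"
  by (auto simp: nodes_def)

lemma level_nodes_eq: "k \<le> K \<Longrightarrow> level_nodes K k = Pair k ` {..<2^k}"
  by (auto simp: level_nodes_def nodes_def level_def)

lemma div_pow_le: "(a::real) / 2^l \<le> c / 2^(l+d) \<longleftrightarrow> a * 2^d \<le> c"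
  by (simp add: power_add field_simps)

lemma div_pow_le2: "(a::real) / 2^(l+d) \<le> c / 2^l \<longleftrightarrow> a \<le> c * 2^d"
  by (simp add: power_add field_simps)

lemma interval_subset:
  "interval (k,i) \<subseteq> interval (l,j) \<longleftrightarrow> (l \<le> k \<and> j*2^(k-l) \<le> i \<and> i < (j+1)*2^(k-l))"
proof -
  have ne: "real i / 2^k < (real i + 1) / 2^k" by (simp add: divide_strict_right_mono)
  have "interval (k,i) \<subseteq> interval (l,j) \<longleftrightarrow>
     real j / 2^l \<le> real i / 2^k \<and> (real i + 1) / 2^k \<le> (real j + 1) / 2^l"
    unfolding interval_def alpha_def beta_def using ne by (auto simp: ivl_subset)
  also have "\<dots> \<longleftrightarrow> (l \<le> k \<and> j*2^(k-l) \<le> i \<and> i < (j+1)*2^(k-l))"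
  proof (cases "l \<le> k")
    case True
    then obtain d where k: "k = l + d" using le_Suc_ex by blast
    have "real j / 2^l \<le> real i / 2^k \<longleftrightarrow> real j * 2^d \<le> real i"
      using div_pow_le k by simp
    also have "\<dots> \<longleftrightarrow> real (j * 2^d) \<le> real i" by simp
    also have "\<dots> \<longleftrightarrow> j * 2^d \<le> i" by (rule of_nat_le_iff)
    finally have 1: "real j / 2^l \<le> real i / 2^k \<longleftrightarrow> j * 2^d \<le> i" .
    have "(real i + 1) / 2^k \<le> (real j + 1) / 2^l \<longleftrightarrow> (real i + 1) \<le> (real j + 1) * 2^d"
      using div_pow_le2 k by simp
    also have "\<dots> \<longleftrightarrow> real (i + 1) \<le> real ((j+1) * 2^d)" by (simp add: algebra_simps)
    also have "\<dots> \<longleftrightarrow> i + 1 \<le> (j+1) * 2^d" by (rule of_nat_le_iff)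
    finally have 2: "(real i + 1) / 2^k \<le> (real j + 1) / 2^l \<longleftrightarrow> i < (j+1) * 2^d" by (simp add: Suc_le_eq)
    show ?thesis using 1 2 True k by simp
  next
    case False
    then obtain d where l: "l = k + Suc d" using less_imp_Suc_add[of k l] by auto
    have "\<not> (real j / 2^l \<le> real i / 2^k \<and> (real i + 1) / 2^k \<le> (real j + 1) / 2^l)"
    proof
      assume a: "real j / 2^l \<le> real i / 2^k \<and> (real i + 1) / 2^k \<le> (real j + 1) / 2^l"
      hence 1: "real j \<le> real i * 2^Suc d" using div_pow_le2[of j k "Suc d" i] l by simp
      from a have 2: "(real i + 1) * 2^Suc d \<le> real j + 1" using div_pow_le[of "real i + 1" k "real j + 1" "Suc d"] l by simp
      have 3: "(1::real) \<le> 2^d" by simp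
      have "real j \<le> real i * (2 * 2 ^ d)" "2 * 2 ^ d + real i * (2 * 2 ^ d) \<le> 1 + real j"
        using 1 2 by (simp_all add: algebra_simps)
      thus False using 3 by linarith
    qed
    thus ?thesis using False by simp
  qed
  finally show ?thesis .
qed

lemma interval_psubset:
  "interval (k,i) \<subset> interval (l,j) \<longleftrightarrow> (l < k \<and> j*2^(k-l) \<le> i \<and> i < (j+1)*2^(k-l))"
  by (auto simp add: less_le_not_le interval_subset)

lemma finite_nodes: "finite (nodes K)"
  unfolding nodes_Sigma by auto

lemma finite_level_nodes: "finite (level_nodes K k)"
  using finite_nodes by (simp add: level_nodes_def)

lemma sum_nodes: "(\<Sum>w\<in>nodes K. f w) = (\<Sum>k\<le>K. \<Sum>i<2^k. f (k,i))"
  unfolding nodes_Sigma by (simp add: sum.Sigma)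

lemma sum_level_nodes: "k \<le> K \<Longrightarrow> (\<Sum>w\<in>level_nodes K k. f w) = (\<Sum>i<2^k. f (k,i))"
  unfolding level_nodes_eq by (subst sum.reindex) (auto simp: inj_on_def)

definition lsum :: "nat \<Rightarrow> (nat\<Rightarrow>real) \<Rightarrow> (node\<Rightarrow>real) \<Rightarrow> nat \<Rightarrow> real" where
  "lsum K b x k = (\<Sum>w\<in>level_nodes K k. exp (x w / b k))"

definition sm :: "nat \<Rightarrow> (nat\<Rightarrow>real) \<Rightarrow> (node\<Rightarrow>real) \<Rightarrow> node \<Rightarrow> real" where
  "sm K b x w = exp (x w / b (level w)) / lsum K b x (level w)"

lemma lsum_pos: "k \<le> K \<Longrightarrow> lsum K b x k > 0"
  unfolding lsum_def sum_level_nodes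
  by (rule sum_pos) (auto simp: lessThan_empty_iff)

lemma deriv_level:
  assumes bk: "b k > 0" and kK: "k \<le> K"
  shows "((\<lambda>t. Ck K b k (\<lambda>w. x w + t * c w)) has_real_derivative
           (\<Sum>w\<in>level_nodes K k. c w * sm K b x w)) (at 0)"
proof -
  let ?L = "level_nodes K k"
  have D: "((\<lambda>t. \<Sum>z\<in>?L. exp ((x z + t * c z) / b k)) has_real_derivative
             (\<Sum>z\<in>?L. exp (x z / b k) * (c z / b k))) (at 0)"
  proof (rule DERIV_sum)
    fix z
    have i: "((\<lambda>t. (x z + t * c z) / b k) has_real_derivative c z / b k) (at 0)"
    proof -
      have "((\<lambda>t. x z + t * c z) has_real_derivative c z) (at 0)"
        using DERIV_add[OF DERIV_const DERIV_cmult_right[OF DERIV_ident, of "c z"]] by simp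
      thus ?thesis by (rule DERIV_cdivide)
    qed
    show "((\<lambda>t. exp ((x z + t * c z) / b k)) has_real_derivative exp (x z / b k) * (c z / b k)) (at 0)"
      using DERIV_chain2[OF DERIV_exp i] by simp
  qed
  have pos: "(\<Sum>z\<in>?L. exp ((x z + 0 * c z) / b k)) > 0"
    using lsum_pos[OF kK, of b x] by (simp add: lsum_def)
  let ?F = "\<lambda>t. \<Sum>z\<in>?L. exp ((x z + t * c z) / b k)"
  let ?D = "\<Sum>z\<in>?L. exp (x z / b k) * (c z / b k)"
  have D2: "((\<lambda>t. b k * ln (?F t)) has_real_derivative b k * (1 / ?F 0 * ?D)) (at 0)"
    using DERIV_cmult[OF DERIV_chain2[OF DERIV_ln_divide[OF pos] D], of "b k"] by simp
  have eq: "b k * (1 / ?F 0 * ?D) = (\<Sum>w\<in>?L. c w * sm K b x w)"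
  proof -
    have lv: "\<And>w. w \<in> ?L \<Longrightarrow> level w = k" by (simp add: level_nodes_def)
    have F0: "?F 0 = lsum K b x k" by (simp add: lsum_def)
    have "b k * (1 / lsum K b x k * ?D)
        = (\<Sum>z\<in>?L. c z * (exp (x z / b k) / lsum K b x k))"
      using bk by (simp add: sum_distrib_left sum_divide_distrib field_simps)
    also have "\<dots> = (\<Sum>w\<in>?L. c w * sm K b x w)"
      by (rule sum.cong) (auto simp: sm_def lv)
    finally show ?thesis by (simp only: F0)
  qed
  show ?thesis using D2 unfolding eq Ck_def .
qed

lemma deriv_dir:
  assumes b: "\<forall>k\<le>K. b k > 0"
  shows "((\<lambda>t. Ctilde K b (\<lambda>w. x w + t * c w)) has_real_derivative
           (\<Sum>w\<in>nodes K. c w * sm K b x w)) (at 0)"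
proof -
  have "((\<lambda>t. \<Sum>k\<le>K. Ck K b k (\<lambda>w. x w + t * c w)) has_real_derivative
           (\<Sum>k\<le>K. \<Sum>w\<in>level_nodes K k. c w * sm K b x w)) (at 0)"
    by (rule DERIV_sum) (use b deriv_level in auto)
  also have "(\<Sum>k\<le>K. \<Sum>w\<in>level_nodes K k. c w * sm K b x w) = (\<Sum>w\<in>nodes K. c w * sm K b x w)"
    by (simp add: sum_nodes sum_level_nodes)
  finally show ?thesis unfolding Ctilde_def .
qed

definition Ds :: "(node \<Rightarrow> real) \<Rightarrow> nat \<Rightarrow> nat \<Rightarrow> nat \<Rightarrow> real" where
  "Ds p l j k = (\<Sum>i\<in>{j*2^(k-l)..<(j+1)*2^(k-l)}. p (k,i))"

lemma Ds_self: "Ds p l j l = p (l,j)"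
  by (simp add: Ds_def)

lemma Ds_split:
  assumes "l < k"
  shows "Ds p l j k = Ds p (Suc l) (2*j) k + Ds p (Suc l) (2*j+1) k"
proof -
  define m where "m = (2::nat)^(k - Suc l)"
  have e: "(2::nat)^(k-l) = 2*m" unfolding m_def using assms
    by (metis Suc_diff_Suc power_Suc)
  have a: "j*2^(k-l) = (2*j)*m" "(j+1)*2^(k-l) = (2*j+1+1)*m" unfolding e by simp_all
  show ?thesis unfolding Ds_def a m_def[symmetric]
    by (rule sum.atLeastLessThan_concat[symmetric]) (auto simp: algebra_simps)
qed

lemma range_bound:
  assumes "j < (2::nat)^l" "l \<le> k"
  shows "(j+1)*2^(k-l) \<le> (2::nat)^k"
proof -
  have "(j+1)*2^(k-l) \<le> 2^l * 2^(k-l)" using assms(1) by (intro mult_right_mono) auto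
  also have "\<dots> = (2::nat)^k" using assms(2) by (simp flip: power_add)
  finally show ?thesis .
qed

lemma sum_range:
  assumes "j < (2::nat)^l" "l \<le> k"
  shows "(\<Sum>i<2^k. if j*2^(k-l) \<le> i \<and> i < (j+1)*2^(k-l) then f i else 0)
       = (\<Sum>i\<in>{j*2^(k-l)..<(j+1)*2^(k-l)}. f i)"
proof -
  have "{i\<in>{..<2^k}. j*2^(k-l) \<le> i \<and> i < (j+1)*2^(k-l)} = {j*2^(k-l)..<(j+1)*2^(k-l)}"
    using range_bound[OF assms] by auto
  thus ?thesis by (simp flip: sum.inter_filter)
qed

lemma Amat_eq:
  "Amat K b (k,i) (l,j) = (if (k,i) = (l,j) then Bsum K b l
      else if l < k \<and> j*2^(k-l) \<le> i \<and> i < (j+1)*2^(k-l) then - b k else 0)"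
  by (simp add: Amat_def interval_psubset level_def)

lemma Atrans_formula:
  assumes "l \<le> K" "j < 2^l"
  shows "Atrans K b p (l,j) = Bsum K b l * p (l,j) - (\<Sum>k\<in>{l+1..K}. b k * Ds p l j k)"
proof -
  define T where "T k = (if k = l then Bsum K b l * p (l,j) else 0)
      + (if l < k then - (b k * Ds p l j k) else 0)" for k
  have inner: "(\<Sum>i<2^k. Amat K b (k,i) (l,j) * p (k,i)) = T k" for k
  proof (cases "k = l")
    case True
    have "(\<Sum>i<2^k. Amat K b (k,i) (l,j) * p (k,i)) = (\<Sum>i<2^k. if i = j then Bsum K b l * p (l,i) else 0)"
      by (rule sum.cong) (auto simp: Amat_eq True)
    also have "\<dots> = Bsum K b l * p (l,j)" using assms True by (simp add: sum.delta)
    finally show ?thesis using True by (simp add: T_def)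
  next
    case False
    show ?thesis
    proof (cases "l < k")
      case True
      have "(\<Sum>i<2^k. Amat K b (k,i) (l,j) * p (k,i)) =
        (\<Sum>i<2^k. if j*2^(k-l) \<le> i \<and> i < (j+1)*2^(k-l) then - b k * p (k,i) else 0)"
        by (rule sum.cong) (auto simp: Amat_eq False True)
      also have "\<dots> = (\<Sum>i\<in>{j*2^(k-l)..<(j+1)*2^(k-l)}. - b k * p (k,i))"
        using sum_range[OF assms(2) less_imp_le[OF True], of "\<lambda>i. - b k * p (k,i)"] by simp
      also have "\<dots> = - (b k * Ds p l j k)" by (simp add: Ds_def sum_distrib_left sum_negf)
      finally show ?thesis using True False by (simp add: T_def)
    next
      case False2: False
      have "(\<Sum>i<2^k. Amat K b (k,i) (l,j) * p (k,i)) = 0"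
        by (rule sum.neutral) (use False False2 in \<open>auto simp: Amat_eq\<close>)
      thus ?thesis using False False2 by (simp add: T_def)
    qed
  qed
  have "Atrans K b p (l,j) = (\<Sum>k\<le>K. T k)"
    unfolding Atrans_def sum_nodes inner ..
  also have "\<dots> = (\<Sum>k\<le>K. if k = l then Bsum K b l * p (l,j) else 0)
      + (\<Sum>k\<le>K. if l < k then - (b k * Ds p l j k) else 0)"
    unfolding T_def by (rule sum.distrib)
  also have "(\<Sum>k\<le>K. if k = l then Bsum K b l * p (l,j) else 0) = Bsum K b l * p (l,j)"
    using assms by (simp add: sum.delta)
  also have "(\<Sum>k\<le>K. if l < k then - (b k * Ds p l j k) else 0) = (\<Sum>k\<in>{l+1..K}. - (b k * Ds p l j k))"
  proof -
    have "{k\<in>{..K}. l < k} = {l+1..K}" by auto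
    thus ?thesis by (simp flip: sum.inter_filter)
  qed
  finally show ?thesis by (simp add: sum_negf)
qed

lemma Bsum_pos: "\<forall>k\<le>K. b k > 0 \<Longrightarrow> l < K \<Longrightarrow> Bsum K b l > 0"
  unfolding Bsum_def by (rule sum_pos) auto

lemma coherent:
  assumes b: "\<forall>k\<le>K. b k > 0"
    and A0: "\<forall>y\<in>inner_nodes K. Atrans K b p y = 0"
    and lK: "l \<le> K"
  shows "\<forall>j<2^l. \<forall>k. l \<le> k \<and> k \<le> K \<longrightarrow> Ds p l j k = p (l,j)"
  using lK
proof (induction rule: inc_induct)
  case base
  then show ?case by (auto simp: Ds_self)
next
  case (step n)
  show ?case
  proof (intro allI impI)
    fix j k :: nat assume j: "j < 2^n" and k: "n \<le> k \<and> k \<le> K"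
    define D where "D = Ds p n j (Suc n)"
    have j2: "2*j < 2^Suc n" "2*j+1 < 2^Suc n" using j by auto
    have DD: "Ds p n j k' = D" if "Suc n \<le> k'" "k' \<le> K" for k'
    proof -
      have "Ds p n j k' = Ds p (Suc n) (2*j) k' + Ds p (Suc n) (2*j+1) k'"
        using that by (intro Ds_split) auto
      also have "\<dots> = p (Suc n, 2*j) + p (Suc n, 2*j+1)"
        using step.IH j2 that by auto
      also have "\<dots> = D"
        unfolding D_def using Ds_split[of n "Suc n" p j] by (simp add: Ds_self)
      finally show ?thesis .
    qed
    have inn: "(n,j) \<in> inner_nodes K"
      using step.hyps j by (auto simp: inner_nodes_def level_nodes_def nodes_def level_def)
    have "0 = Bsum K b n * p (n,j) - (\<Sum>k\<in>{n+1..K}. b k * Ds p n j k)"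
      using A0 inn Atrans_formula[of n K j b p] step.hyps j by simp
    also have "(\<Sum>k\<in>{n+1..K}. b k * Ds p n j k) = (\<Sum>k\<in>{n+1..K}. b k * D)"
      by (rule sum.cong) (auto simp: DD)
    also have "\<dots> = Bsum K b n * D" by (simp add: Bsum_def sum_distrib_right)
    finally have "Bsum K b n * (p (n,j) - D) = 0" by (simp add: right_diff_distrib)
    hence pD: "p (n,j) = D" using Bsum_pos[OF b step.hyps(2)] by simp
    show "Ds p n j k = p (n,j)"
    proof (cases "k = n")
      case True thus ?thesis by (simp add: Ds_self)
    next
      case False thus ?thesis using k DD pD by auto
    qed
  qed
qed

lemma phi_dyadic:
  assumes "l \<le> K"
  shows "phi (l,j) (real i / 2^K) = (if j*2^(K-l) \<le> i \<and> i < (j+1)*2^(K-l) then 1 else 0)"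
proof -
  obtain d where K: "K = l + d" using assms le_Suc_ex by blast
  have 1: "real j / 2^l \<le> real i / 2^K \<longleftrightarrow> j*2^d \<le> i"
  proof -
    have "real j / 2^l \<le> real i / 2^K \<longleftrightarrow> real j * 2^d \<le> real i" using div_pow_le K by simp
    also have "\<dots> \<longleftrightarrow> real (j * 2^d) \<le> real i" by simp
    also have "\<dots> \<longleftrightarrow> j * 2^d \<le> i" by (rule of_nat_le_iff)
    finally show ?thesis .
  qed
  have 2: "(real j + 1) / 2^l \<le> real i / 2^K \<longleftrightarrow> (j+1)*2^d \<le> i"
  proof -
    have "(real j + 1) / 2^l \<le> real i / 2^K \<longleftrightarrow> (real j + 1) * 2^d \<le> real i" using div_pow_le K by simp
    also have "\<dots> \<longleftrightarrow> real ((j+1) * 2^d) \<le> real i" by (simp add: algebra_simps)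
    also have "\<dots> \<longleftrightarrow> (j+1) * 2^d \<le> i" by (rule of_nat_le_iff)
    finally show ?thesis .
  qed
  show ?thesis using 1 2 K
    by (auto simp: phi_def interval_def alpha_def beta_def not_le)
qed

lemma shift_upd:
  assumes "y \<in> inner_nodes K"
  shows "shift K b \<theta> (\<eta>(y := \<eta> y + t)) = (\<lambda>w. shift K b \<theta> \<eta> w + t * Amat K b w y)"
proof
  fix w
  have fin: "finite (inner_nodes K)" using finite_nodes by (simp add: inner_nodes_def)
  have "(\<Sum>y'\<in>inner_nodes K. Amat K b w y' * (\<eta>(y := \<eta> y + t)) y')
      = (\<Sum>y'\<in>inner_nodes K. Amat K b w y' * \<eta> y' + (if y' = y then Amat K b w y' * t else 0))"
    by (rule sum.cong) (auto simp: algebra_simps)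
  also have "\<dots> = (\<Sum>y'\<in>inner_nodes K. Amat K b w y' * \<eta> y') + Amat K b w y * t"
    using fin assms by (simp add: sum.distrib sum.delta)
  finally show "shift K b \<theta> (\<eta>(y := \<eta> y + t)) w = shift K b \<theta> \<eta> w + t * Amat K b w y"
    by (simp add: shift_def algebra_simps)
qed

theorem theorem3:
  fixes K :: nat and b :: "nat \<Rightarrow> real"
    and \<theta> \<eta>s p :: "node \<Rightarrow> real"
  assumes "K \<ge> 1"
    and "\<forall>k\<le>K. b k > 0"
    and "\<forall>\<eta>. Ctilde K b (shift K b \<theta> \<eta>s) \<le> Ctilde K b (shift K b \<theta> \<eta>)"
    and "is_gradient (nodes K) (Ctilde K b) (shift K b \<theta> \<eta>s) p"
  shows "(\<forall>y\<in>inner_nodes K. Atrans K b p y = 0) \<and> in_coherent_space K p"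
proof -
  note b = assms(2)
  define x where "x = shift K b \<theta> \<eta>s"
  have grad: "p z = sm K b x z" if z: "z \<in> nodes K" for z
  proof -
    have e: "x(z := x z + t) = (\<lambda>w. x w + t * (if w = z then 1 else 0))" for t
      by (auto simp: fun_eq_iff)
    have d1: "((\<lambda>t. Ctilde K b (x(z := x z + t))) has_real_derivative p z) (at 0)"
      using assms(4) z unfolding is_gradient_def x_def by blast
    have "((\<lambda>t. Ctilde K b (x(z := x z + t))) has_real_derivative
        (\<Sum>w\<in>nodes K. (if w = z then 1 else 0) * sm K b x w)) (at 0)"
      unfolding e by (rule deriv_dir[OF b])
    also have "(\<Sum>w\<in>nodes K. (if w = z then 1 else 0) * sm K b x w) = sm K b x z"
    proof -
      have "(\<Sum>w\<in>nodes K. (if w = z then 1 else 0) * sm K b x w) = (\<Sum>w\<in>nodes K. if w = z then sm K b x w else 0)"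
        by (rule sum.cong) auto
      thus ?thesis using z finite_nodes by (simp add: sum.delta)
    qed
    finally show ?thesis using d1 DERIV_unique by blast
  qed
  have A0: "\<forall>y\<in>inner_nodes K. Atrans K b p y = 0"
  proof
    fix y assume y: "y \<in> inner_nodes K"
    let ?f = "\<lambda>t. Ctilde K b (shift K b \<theta> (\<eta>s(y := \<eta>s y + t)))"
    have "((\<lambda>t. Ctilde K b (\<lambda>w. x w + t * Amat K b w y)) has_real_derivative
        (\<Sum>w\<in>nodes K. Amat K b w y * sm K b x w)) (at 0)"
      by (rule deriv_dir[OF b])
    also have "(\<Sum>w\<in>nodes K. Amat K b w y * sm K b x w) = Atrans K b p y"
      unfolding Atrans_def by (rule sum.cong) (auto simp: grad)
    finally have d: "(?f has_real_derivative Atrans K b p y) (at 0)"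
      unfolding shift_upd[OF y] x_def .
    have "\<forall>t. \<bar>0 - t\<bar> < 1 \<longrightarrow> ?f 0 \<le> ?f t"
      using assms(3) by simp
    thus "Atrans K b p y = 0" using DERIV_local_min[OF d, of 1] by simp
  qed
  have coh: "in_coherent_space K p"
  proof -
    define \<mu> where "\<mu> \<omega> = p (K, nat \<lfloor>\<omega> * 2^K\<rfloor>)" for \<omega> :: real
    have oc: "outcomes K = (\<lambda>i. real i / 2^K) ` {..<2^K}" by (auto simp: outcomes_def)
    have inj: "inj_on (\<lambda>i. real i / 2^K) {..<2^K}" by (auto simp: inj_on_def)
    have sumo: "(\<Sum>\<omega>\<in>outcomes K. g \<omega>) = (\<Sum>i<2^K. g (real i / 2^K))" for g
      unfolding oc by (simp add: sum.reindex[OF inj])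
    have mu: "\<mu> (real i / 2^K) = p (K,i)" for i by (simp add: \<mu>_def)
    have pK: "p (K,i) = exp (x (K,i) / b K) / lsum K b x K" if "i < 2^K" for i
      using grad[of "(K,i)"] that by (simp add: nodes_def sm_def level_def)
    have lpos: "lsum K b x K > 0" by (rule lsum_pos) simp
    have nn: "\<forall>\<omega>\<in>outcomes K. \<mu> \<omega> \<ge> 0"
      unfolding oc using lpos by (auto simp: mu pK)
    have s1: "(\<Sum>\<omega>\<in>outcomes K. \<mu> \<omega>) = 1"
    proof -
      have "(\<Sum>\<omega>\<in>outcomes K. \<mu> \<omega>) = (\<Sum>i<2^K. exp (x (K,i) / b K) / lsum K b x K)"
        unfolding sumo mu by (rule sum.cong) (auto simp: pK)
      also have "\<dots> = lsum K b x K / lsum K b x K"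
        by (simp add: sum_divide_distrib[symmetric] lsum_def sum_level_nodes)
      finally show ?thesis using lpos by simp
    qed
    have cz: "p z = (\<Sum>\<omega>\<in>outcomes K. \<mu> \<omega> * phi z \<omega>)" if z: "z \<in> nodes K" for z
    proof -
      obtain l j where zl: "z = (l,j)" "l \<le> K" "j < 2^l" using z by (auto simp: nodes_def)
      have "(\<Sum>\<omega>\<in>outcomes K. \<mu> \<omega> * phi z \<omega>)
          = (\<Sum>i<2^K. if j*2^(K-l) \<le> i \<and> i < (j+1)*2^(K-l) then p (K,i) else 0)"
        unfolding sumo mu zl(1) using zl(2) by (intro sum.cong) (auto simp: phi_dyadic)
      also have "\<dots> = Ds p l j K"
        unfolding Ds_def by (rule sum_range[OF zl(3) zl(2)])
      also have "\<dots> = p (l,j)" using coherent[OF b A0 zl(2)] zl by auto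
      finally show ?thesis using zl by simp
    qed
    show ?thesis unfolding in_coherent_space_def using nn s1 cz by blast
  qed
  show ?thesis using A0 coh by blast
qed

end
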